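(* Let $\Omega\subset\mathbb{R}^3$ be a domain with coordinates $\mathbf{X}$ and let $\mathbf{x}=\boldsymbol{\chi}(\mathbf{X})$ be a smooth, one-to-one, invertible map of $\Omega$ onto $\omega=\boldsymbol{\chi}(\Omega)$, with deformation gradient $F_{iI}=\partial x_i/\partial X_I$ and Jacobian $\Lambda=\det\mathbf{F}>0$. Let $\kappa_0>0$, let $\boldsymbol{\rho}_0$ be a symmetric positive definite second order tensor field on $\Omega$, let $\mathbf{Q}_0$ be a symmetric, invertible second order tensor field on $\Omega$ with $\partial Q_{0IJ}/\partial X_I=0$ for all $J$, and let $\mathbf{Q}$ be an arbitrary symmetric, invertible second order tensor field on $\omega$ with $\partial Q_{ij}/\partial x_i=0$ for all $j$. For a time-dependent displacement field $\mathbf{U}(\mathbf{X},t)$ in $\Omega$ define the kinetic and strain energy densities $$T_0=\dot{\mathbf{U}}^t\boldsymbol{\rho}_0\dot{\mathbf{U}},\qquad W_0=\kappa_0\big(Q_{0IJ}\,\partial U_J/\partial X_I\big)^2,$$ and for a displacement field $\mathbf{u}(\mathbf{x},t)$ in $\omega$ define $$T=\dot{\mathbf{u}}^t\boldsymbol{\rho}\dot{\mathbf{u}},\qquad W=\kappa\big(Q_{ij}\,\partial u_j/\partial x_i\big)^2,$$ where $$\kappa=\Lambda\kappa_0,\qquad \boldsymbol{\rho}=\Lambda\,\mathbf{Q}\mathbf{F}^{-t}\mathbf{Q}_0^{-1}\boldsymbol{\rho}_0\mathbf{Q}_0^{-1}\mathbf{F}^{-1}\mathbf{Q}.$$ Then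 these energy densities are equivalent: if $\mathbf{U}$ and $\mathbf{u}$ are related by $\mathbf{U}=\mathbf{G}^t\mathbf{u}$ with $\mathbf{G}^t=\Lambda\,\mathbf{Q}_0^{-1}\mathbf{F}^{-1}\mathbf{Q}$ (evaluated at corresponding points $\mathbf{x}=\boldsymbol{\chi}(\mathbf{X})$), then $T\,\mathrm{d}v=T_0\,\mathrm{d}V$ and $W\,\mathrm{d}v=W_0\,\mathrm{d}V$, i.e. $T=\Lambda^{-1}T_0$ and $W=\Lambda^{-1}W_0$.
   Context: Repeated indices are summed; upper-case indices refer to components in the undeformed coordinates $\mathbf{X}$ and lower-case indices to components in the deformed coordinates $\mathbf{x}$. $\mathbf{F}^{-t}$ denotes the transpose of $\mathbf{F}^{-1}$, and $\mathrm{d}v=\Lambda\,\mathrm{d}V$ relates volume elements. The tensors $\mathbf{Q}_0,\mathbf{Q}$ define pentamode elastic stiffnesses $\kappa_0\mathbf{Q}_0\otimes\mathbf{Q}_0$ and $\kappa\mathbf{Q}\otimes\mathbf{Q}$. *)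

theory Defs
  imports "HOL-Analysis.Analysis"
begin

definition pd :: "(real^3 \<Rightarrow> 'a::real_normed_vector) \<Rightarrow> 3 \<Rightarrow> real^3 \<Rightarrow> 'a" where
  "pd f I X = vector_derivative (\<lambda>s. f (X + s *\<^sub>R axis I 1)) (at 0)"

fun Ck :: "nat \<Rightarrow> (real^3) set \<Rightarrow> (real^3 \<Rightarrow> 'a::real_normed_vector) \<Rightarrow> bool" where
  "Ck 0 S f = continuous_on S f"
| "Ck (Suc k) S f = (continuous_on S f \<and>
      (\<forall>I. \<forall>X\<in>S. (\<lambda>s. f (X + s *\<^sub>R axis I 1)) differentiable (at 0)) \<and>
      (\<forall>I. Ck k S (pd f I)))"

definition smooth_on :: "(real^3) set \<Rightarrow> (real^3 \<Rightarrow> 'a::real_normed_vector) \<Rightarrow> bool" where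
  "smooth_on S f = (\<forall>k. Ck k S f)"

text \<open>Gradient: (grad f X) $ I $ J = dF_J / dX_I.  Deformation gradient: (defgrad chi X) $ i $ I = dx_i/dX_I.\<close>
definition grad :: "(real^3 \<Rightarrow> real^3) \<Rightarrow> real^3 \<Rightarrow> real^3^3" where
  "grad f X = (\<chi> I. pd f I X)"

definition defgrad :: "(real^3 \<Rightarrow> real^3) \<Rightarrow> real^3 \<Rightarrow> real^3^3" where
  "defgrad f X = transpose (grad f X)"

text \<open>Divergence on the first index: (div Q) $ J = sum_I dQ_{IJ}/dX_I.\<close>
definition divergence :: "(real^3 \<Rightarrow> real^3^3) \<Rightarrow> real^3 \<Rightarrow> real^3" where
  "divergence Q X = (\<Sum>I\<in>UNIV. pd Q I X $ I)"

definition sym_pos_def :: "real^3^3 \<Rightarrow> bool" where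
  "sym_pos_def A = (transpose A = A \<and> (\<forall>v. v \<noteq> 0 \<longrightarrow> v \<bullet> (A *v v) > 0))"

text \<open>Kinetic energy density v^t rho v and pentamode strain energy density k (Q_{IJ} D_{IJ})^2,
  where D_{IJ} = dU_J/dX_I.\<close>
definition kin_energy :: "real^3^3 \<Rightarrow> real^3 \<Rightarrow> real" where
  "kin_energy rho v = v \<bullet> (rho *v v)"

definition strain_energy :: "real \<Rightarrow> real^3^3 \<Rightarrow> real^3^3 \<Rightarrow> real" where
  "strain_energy k Q D = k * (\<Sum>I\<in>UNIV. \<Sum>J\<in>UNIV. Q $ I $ J * D $ I $ J)^2"

end

theory Submission
  imports Defs "HOL-Homology.Invariance_of_Domain"
begin


lemma bilinear_matmul: "bilinear (\<lambda>(A::real^'n^'m) (B::real^'k^'n). A ** B)"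
  unfolding bilinear_def
  by (auto intro!: linearI simp: vec_eq_iff matrix_matrix_mult_def sum_distrib_left algebra_simps sum.distrib)

lemma bilinear_matvec: "bilinear (\<lambda>(A::real^'n^'m) (x::real^'n). A *v x)"
  unfolding bilinear_def
  by (auto intro!: linearI simp: vec_eq_iff matrix_vector_mult_def sum_distrib_left algebra_simps sum.distrib)

lemma bb_matmul: "bounded_bilinear (\<lambda>(A::real^'n^'m) (B::real^'k^'n). A ** B)"
  using bilinear_matmul bilinear_conv_bounded_bilinear by blast
lemma bb_matvec: "bounded_bilinear (\<lambda>(A::real^'n^'m) (x::real^'n). A *v x)"
  using bilinear_matvec bilinear_conv_bounded_bilinear by blast

lemma VD_nth: "(f has_vector_derivative f') F \<Longrightarrow> ((\<lambda>s. f s $ i) has_vector_derivative f' $ i) F"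
  by (rule bounded_linear.has_vector_derivative[OF bounded_linear_vec_nth])

lemma bl_emb: "bounded_linear (\<lambda>a::'a::real_normed_vector. (\<chi> j::'n::finite. if j = i then a else 0))"
proof (rule bounded_linear_intro[where K=1])
  fix a :: 'a
  have "norm (\<chi> j::'n. if j = i then a else 0) \<le> (\<Sum>j\<in>UNIV. norm ((\<chi> j::'n. if j = i then a else 0) $ j))"
    unfolding norm_vec_def by (rule L2_set_le_sum) auto
  also have "\<dots> = norm a" by (simp add: if_distrib cong: if_cong)
  finally show "norm (\<chi> j::'n. if j = i then a else 0) \<le> norm a * 1" by simp
qed (auto simp: vec_eq_iff)

lemma VD_vec:
  fixes f :: "real \<Rightarrow> 'a::real_normed_vector^'n"
  assumes "\<And>i. ((\<lambda>s. f s $ i) has_vector_derivative f' $ i) F"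
  shows "(f has_vector_derivative f') F"
proof -
  have "((\<lambda>s. \<Sum>i\<in>UNIV. (\<chi> j::'n. if j = i then f s $ i else 0)) has_vector_derivative (\<Sum>i\<in>UNIV. (\<chi> j::'n. if j = i then f' $ i else 0))) F"
    apply (rule has_vector_derivative_sum)
    apply (rule bounded_linear.has_vector_derivative[OF bl_emb, OF assms])
    done
  moreover have "\<And>x::'a^'n. (\<Sum>i\<in>UNIV. (\<chi> j::'n. if j = i then x $ i else 0)) = x"
    by (simp add: vec_eq_iff sum_component if_distrib cong: if_cong)
  ultimately show ?thesis by simp
qed

lemma VD_mat:
  fixes f :: "real \<Rightarrow> real^'n^'m"
  assumes "\<And>i j. ((\<lambda>s. f s $ i $ j) has_vector_derivative f' $ i $ j) F"
  shows "(f has_vector_derivative f') F"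
  by (rule VD_vec, rule VD_vec) (simp add: assms)


definition adj3 :: "real^3^3 \<Rightarrow> real^3^3" where
  "adj3 A = vector [
     vector [A$2$2*A$3$3 - A$2$3*A$3$2, A$1$3*A$3$2 - A$1$2*A$3$3, A$1$2*A$2$3 - A$1$3*A$2$2],
     vector [A$2$3*A$3$1 - A$2$1*A$3$3, A$1$1*A$3$3 - A$1$3*A$3$1, A$1$3*A$2$1 - A$1$1*A$2$3],
     vector [A$2$1*A$3$2 - A$2$2*A$3$1, A$1$2*A$3$1 - A$1$1*A$3$2, A$1$1*A$2$2 - A$1$2*A$2$1]]"

lemma adj3_right: "A ** adj3 A = det A *\<^sub>R mat 1"
  by (simp add: vec_eq_iff forall_3 matrix_matrix_mult_def sum_3 det_3 mat_def adj3_def algebra_simps)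

lemma adj3_left: "adj3 A ** A = det A *\<^sub>R mat 1"
  by (simp add: vec_eq_iff forall_3 matrix_matrix_mult_def sum_3 det_3 mat_def adj3_def algebra_simps)

lemma scaleR_matmul_left: "(c *\<^sub>R (X::real^'n^'m)) ** (Y::real^'k^'n) = c *\<^sub>R (X ** Y)"
  by (simp add: vec_eq_iff matrix_matrix_mult_def sum_distrib_left algebra_simps)
lemma scaleR_matmul_right: "(X::real^'n^'m) ** (c *\<^sub>R (Y::real^'k^'n)) = c *\<^sub>R (X ** Y)"
  by (simp add: vec_eq_iff matrix_matrix_mult_def sum_distrib_left algebra_simps)

lemma matrix_inv_eqI:
  fixes A B :: "real^'n^'n"
  assumes "A ** B = mat 1" "B ** A = mat 1"
  shows "matrix_inv A = B"
proof -
  have ex: "\<exists>A'. A ** A' = mat 1 \<and> A' ** A = mat 1" using assms by blast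
  define C where "C = matrix_inv A"
  have C: "A ** C = mat 1 \<and> C ** A = mat 1"
    unfolding C_def matrix_inv_def by (rule someI_ex[OF ex])
  have "C = C ** (A ** B)" by (simp add: assms)
  also have "\<dots> = (C ** A) ** B" by (simp add: matrix_mul_assoc)
  also have "\<dots> = B" using C by simp
  finally show ?thesis unfolding C_def .
qed

lemma inv_adj3: "det A \<noteq> 0 \<Longrightarrow> matrix_inv A = (1 / det A) *\<^sub>R adj3 A"
  by (rule matrix_inv_eqI) (simp_all add: scaleR_matmul_left scaleR_matmul_right adj3_left adj3_right)

lemma invertible_det: "invertible (A::real^'n^'n) \<Longrightarrow> det A \<noteq> 0"
  using invertible_det_nz by blast

lemma entries_deriv:
  assumes "(f has_vector_derivative f') (at x)"
  shows "((\<lambda>s. f s $ i $ j) has_real_derivative f' $ i $ j) (at x)"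
  unfolding has_real_derivative_iff_has_vector_derivative
  by (rule VD_nth, rule VD_nth, rule assms)

lemma adj3_deriv:
  assumes f: "(f has_vector_derivative f') (at x)"
  shows "((\<lambda>s. adj3 (f s)) has_vector_derivative (adj3 (f x + f') - adj3 (f x) - adj3 f')) (at x)"
proof (rule VD_mat)
  note e = entries_deriv[OF f]
  fix i j :: 3
  show "((\<lambda>s. adj3 (f s) $ i $ j) has_vector_derivative (adj3 (f x + f') - adj3 (f x) - adj3 f') $ i $ j) (at x)"
    unfolding has_real_derivative_iff_has_vector_derivative[symmetric]
    using exhaust_3[of i] exhaust_3[of j]
    by (auto simp: adj3_def algebra_simps intro!: derivative_eq_intros e)
qed

lemma det_deriv_ex:
  fixes f :: "real \<Rightarrow> real^3^3"
  assumes f: "(f has_vector_derivative f') (at x)"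
  shows "\<exists>D. ((\<lambda>s. det (f s)) has_real_derivative D) (at x)"
  unfolding det_3 using entries_deriv[OF f]
  by (intro exI) (rule derivative_intros | assumption)+




lemma MVT_D:
  fixes f f' :: "real \<Rightarrow> real"
  assumes "a < b" "\<And>x. a \<le> x \<Longrightarrow> x \<le> b \<Longrightarrow> (f has_real_derivative f' x) (at x)"
  shows "\<exists>z. a < z \<and> z < b \<and> f b - f a = (b - a) * f' z"
proof -
  have c: "continuous_on {a..b} f"
    by (rule DERIV_continuous_on[where D=f']) (auto intro: has_field_derivative_at_within assms(2))
  have d: "f differentiable (at x)" if "a < x" "x < b" for x
  proof -
    have "(f has_real_derivative f' x) (at x)" using that by (intro assms(2)) auto
    then show ?thesis unfolding real_differentiable_def by blast
  qed
  obtain l z where lz: "a < z" "z < b" "DERIV f z :> l" "f b - f a = (b - a) * l"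
    using MVT[OF assms(1) c d] by blast
  have "DERIV f z :> f' z" using lz by (intro assms(2)) auto
  then have "l = f' z" using lz(3) DERIV_unique by blast
  then show ?thesis using lz by blast
qed

lemma line_shift:
  fixes h :: "'a::real_normed_vector \<Rightarrow> real"
  assumes "\<forall>Y\<in>S. ((\<lambda>s. h (Y + s *\<^sub>R v)) has_real_derivative h' Y) (at 0)"
    and "Y + a *\<^sub>R v \<in> S"
  shows "((\<lambda>b. h (Y + b *\<^sub>R v)) has_real_derivative h' (Y + a *\<^sub>R v)) (at a)"
proof -
  have e: "(\<lambda>s. h (Y + (s + a) *\<^sub>R v)) = (\<lambda>s. h ((Y + a *\<^sub>R v) + s *\<^sub>R v))"
    by (simp add: algebra_simps)
  have "((\<lambda>s. h (Y + (s + a) *\<^sub>R v)) has_real_derivative h' (Y + a *\<^sub>R v)) (at 0)"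
    unfolding e using assms by blast
  from DERIV_shift[of "\<lambda>b. h (Y + b *\<^sub>R v)" "h' (Y + a *\<^sub>R v)" 0 a, THEN iffD2, OF this]
  show ?thesis by simp
qed



lemma schwarz_half:
  fixes g gI gIJ :: "'a::real_normed_vector \<Rightarrow> real"
  assumes dI: "\<forall>Y\<in>S. ((\<lambda>s. g (Y + s *\<^sub>R u)) has_real_derivative gI Y) (at 0)"
    and dIJ: "\<forall>Y\<in>S. ((\<lambda>s. gI (Y + s *\<^sub>R v)) has_real_derivative gIJ Y) (at 0)"
    and h: "h > 0"
    and box: "\<And>a b. 0 \<le> a \<Longrightarrow> a \<le> h \<Longrightarrow> 0 \<le> b \<Longrightarrow> b \<le> h \<Longrightarrow> X + a *\<^sub>R u + b *\<^sub>R v \<in> S"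
  shows "\<exists>a b. 0 \<le> a \<and> a \<le> h \<and> 0 \<le> b \<and> b \<le> h \<and>
     g (X + h *\<^sub>R u + h *\<^sub>R v) - g (X + h *\<^sub>R u) - g (X + h *\<^sub>R v) + g X = h * h * gIJ (X + a *\<^sub>R u + b *\<^sub>R v)"
proof -
  define \<phi> where "\<phi> a = g ((X + h *\<^sub>R v) + a *\<^sub>R u) - g (X + a *\<^sub>R u)" for a
  have "\<exists>z. 0 < z \<and> z < h \<and> \<phi> h - \<phi> 0 = (h - 0) * (gI ((X + h *\<^sub>R v) + z *\<^sub>R u) - gI (X + z *\<^sub>R u))"
    unfolding \<phi>_def
  proof (rule MVT_D[OF h], rule DERIV_diff)
    fix x assume x: "0 \<le> x" "x \<le> h"
    show "((\<lambda>a. g ((X + h *\<^sub>R v) + a *\<^sub>R u)) has_real_derivative gI ((X + h *\<^sub>R v) + x *\<^sub>R u)) (at x)"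
    proof (rule line_shift[OF dI])
      have "X + x *\<^sub>R u + h *\<^sub>R v \<in> S" using box x h by simp
      then show "(X + h *\<^sub>R v) + x *\<^sub>R u \<in> S" by (simp add: add_ac)
    qed
    show "((\<lambda>a. g (X + a *\<^sub>R u)) has_real_derivative gI (X + x *\<^sub>R u)) (at x)"
      by (rule line_shift[OF dI]) (use box[of x 0] x h in simp)
  qed
  then obtain a where a: "0 < a" "a < h" "\<phi> h - \<phi> 0 = h * (gI ((X + h *\<^sub>R v) + a *\<^sub>R u) - gI (X + a *\<^sub>R u))"
    by auto
  have "\<exists>z. 0 < z \<and> z < h \<and> gI ((X + a *\<^sub>R u) + h *\<^sub>R v) - gI ((X + a *\<^sub>R u) + 0 *\<^sub>R v) = (h - 0) * gIJ ((X + a *\<^sub>R u) + z *\<^sub>R v)"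
  proof (rule MVT_D[OF h])
    fix x assume x: "0 \<le> x" "x \<le> h"
    show "((\<lambda>b. gI ((X + a *\<^sub>R u) + b *\<^sub>R v)) has_real_derivative gIJ ((X + a *\<^sub>R u) + x *\<^sub>R v)) (at x)"
      by (rule line_shift[OF dIJ]) (use box[of a x] x a in simp)
  qed
  then obtain b where b: "0 < b" "b < h" "gI ((X + a *\<^sub>R u) + h *\<^sub>R v) - gI (X + a *\<^sub>R u) = h * gIJ ((X + a *\<^sub>R u) + b *\<^sub>R v)"
    by auto
  have e1: "X + h *\<^sub>R v + h *\<^sub>R u = X + h *\<^sub>R u + h *\<^sub>R v" by (simp add: add_ac)
  have e2: "X + h *\<^sub>R v + a *\<^sub>R u = X + a *\<^sub>R u + h *\<^sub>R v" by (simp add: add_ac)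
  have "g (X + h *\<^sub>R u + h *\<^sub>R v) - g (X + h *\<^sub>R u) - g (X + h *\<^sub>R v) + g X = \<phi> h - \<phi> 0"
    unfolding \<phi>_def e1 by simp
  also have "\<dots> = h * (gI (X + a *\<^sub>R u + h *\<^sub>R v) - gI (X + a *\<^sub>R u))"
    using a(3) unfolding e2 .
  also have "\<dots> = h * h * gIJ (X + a *\<^sub>R u + b *\<^sub>R v)"
    unfolding b(3) by simp
  finally show ?thesis using a b by (intro exI[of _ a] exI[of _ b]) auto
qed




lemma box_dist:
  fixes u v :: "'a::real_normed_vector"
  assumes "0 \<le> a" "a \<le> h" "0 \<le> b" "b \<le> h" "h * (norm u + norm v) < m"
  shows "dist (X + a *\<^sub>R u + b *\<^sub>R v) X < m"
proof -
  have "dist (X + a *\<^sub>R u + b *\<^sub>R v) X = norm (a *\<^sub>R u + b *\<^sub>R v)"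
    by (simp add: dist_norm)
  also have "\<dots> \<le> a * norm u + b * norm v"
    using norm_triangle_ineq[of "a *\<^sub>R u" "b *\<^sub>R v"] assms by simp
  also have "\<dots> \<le> h * norm u + h * norm v"
    using assms by (intro add_mono mult_right_mono) auto
  finally show ?thesis using assms(5) by (simp add: algebra_simps)
qed

lemma aux_abs: "\<bar>c - A\<bar> < D / 2 \<Longrightarrow> \<bar>c' - B\<bar> < D / 2 \<Longrightarrow> c = c' \<Longrightarrow> D = \<bar>A - B\<bar> \<Longrightarrow> False"
  for c c' A B D :: real by arith

lemma schwarz:
  fixes g gu gv guv gvu :: "'a::real_normed_vector \<Rightarrow> real"
  assumes S: "open S" "X \<in> S"
    and du: "\<forall>Y\<in>S. ((\<lambda>s. g (Y + s *\<^sub>R u)) has_real_derivative gu Y) (at 0)"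
    and dv: "\<forall>Y\<in>S. ((\<lambda>s. g (Y + s *\<^sub>R v)) has_real_derivative gv Y) (at 0)"
    and duv: "\<forall>Y\<in>S. ((\<lambda>s. gu (Y + s *\<^sub>R v)) has_real_derivative guv Y) (at 0)"
    and dvu: "\<forall>Y\<in>S. ((\<lambda>s. gv (Y + s *\<^sub>R u)) has_real_derivative gvu Y) (at 0)"
    and cuv: "continuous_on S guv" and cvu: "continuous_on S gvu"
  shows "guv X = gvu X"
proof (rule ccontr)
  assume ne: "guv X \<noteq> gvu X"
  define d where "d = \<bar>guv X - gvu X\<bar>"
  have d: "d > 0" using ne by (simp add: d_def)
  obtain r where r: "r > 0" "ball X r \<subseteq> S" using S open_contains_ball by blast
  have c1: "continuous (at X) guv" using cuv S continuous_on_eq_continuous_at by blast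
  have c2: "continuous (at X) gvu" using cvu S continuous_on_eq_continuous_at by blast
  obtain d1 where d1: "d1 > 0" "\<forall>Y. dist Y X < d1 \<longrightarrow> dist (guv Y) (guv X) < d / 2"
    using c1 d unfolding continuous_at_eps_delta by (meson half_gt_zero)
  obtain d2 where d2: "d2 > 0" "\<forall>Y. dist Y X < d2 \<longrightarrow> dist (gvu Y) (gvu X) < d / 2"
    using c2 d unfolding continuous_at_eps_delta by (meson half_gt_zero)
  define m where "m = min r (min d1 d2)"
  have m: "m > 0" using r d1 d2 by (simp add: m_def)
  define h where "h = m / (2 * (norm u + norm v + 1))"
  have den: "2 * (norm u + norm v + 1) > 0" by (smt (verit) norm_ge_zero)
  have hpos: "h > 0" unfolding h_def using m den by (rule divide_pos_pos)
  have hm: "h * (norm u + norm v) < m"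
  proof -
    have "h * (norm u + norm v) \<le> h * (norm u + norm v + 1)" using hpos by simp
    also have "\<dots> = m / 2"
    proof -
      have nz: "norm u + norm v + 1 \<noteq> 0" using den by auto
      show ?thesis unfolding h_def using nz by (simp add: field_simps)
    qed
    finally show ?thesis using m by simp
  qed
  have hm': "h * (norm v + norm u) < m" using hm by (simp add: add.commute)
  have box1: "X + a *\<^sub>R u + b *\<^sub>R v \<in> S" if "0 \<le> a" "a \<le> h" "0 \<le> b" "b \<le> h" for a b
    using box_dist[OF that hm] r unfolding m_def by (auto simp: dist_commute)
  have box2: "X + a *\<^sub>R v + b *\<^sub>R u \<in> S" if "0 \<le> a" "a \<le> h" "0 \<le> b" "b \<le> h" for a b
    using box_dist[OF that hm'] r unfolding m_def by (auto simp: dist_commute)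
  obtain a1 b1 where ab1: "0 \<le> a1" "a1 \<le> h" "0 \<le> b1" "b1 \<le> h"
    "g (X + h *\<^sub>R u + h *\<^sub>R v) - g (X + h *\<^sub>R u) - g (X + h *\<^sub>R v) + g X = h * h * guv (X + a1 *\<^sub>R u + b1 *\<^sub>R v)"
    using schwarz_half[OF du duv hpos box1] by blast
  obtain a2 b2 where ab2: "0 \<le> a2" "a2 \<le> h" "0 \<le> b2" "b2 \<le> h"
    "g (X + h *\<^sub>R v + h *\<^sub>R u) - g (X + h *\<^sub>R v) - g (X + h *\<^sub>R u) + g X = h * h * gvu (X + a2 *\<^sub>R v + b2 *\<^sub>R u)"
    using schwarz_half[OF dv dvu hpos box2] by blast
  have eqx: "X + h *\<^sub>R v + h *\<^sub>R u = X + h *\<^sub>R u + h *\<^sub>R v" by (simp add: add_ac)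
  have "h * h * guv (X + a1 *\<^sub>R u + b1 *\<^sub>R v) = h * h * gvu (X + a2 *\<^sub>R v + b2 *\<^sub>R u)"
    using ab1(5) ab2(5) unfolding eqx by linarith
  then have eq: "guv (X + a1 *\<^sub>R u + b1 *\<^sub>R v) = gvu (X + a2 *\<^sub>R v + b2 *\<^sub>R u)"
    using hpos by simp
  have p1: "dist (guv (X + a1 *\<^sub>R u + b1 *\<^sub>R v)) (guv X) < d / 2"
    using d1(2) box_dist[OF ab1(1-4) hm] unfolding m_def by auto
  have p2: "dist (gvu (X + a2 *\<^sub>R v + b2 *\<^sub>R u)) (gvu X) < d / 2"
    using d2(2) box_dist[OF ab2(1-4) hm'] unfolding m_def by auto
  show False using aux_abs[OF p1[unfolded dist_real_def] p2[unfolded dist_real_def] eq d_def] .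
qed




lemma S1: 
  fixes P :: "3 \<Rightarrow> real^3^3" and M :: "real^3^3"
  shows "(\<Sum>I\<in>UNIV. ((P I ** M) *v w) $ I) = (\<Sum>J\<in>UNIV. (\<Sum>I\<in>UNIV. P I $ I) $ J * (M *v w) $ J)"
  by (simp add: sum_3 matrix_vector_mult_def matrix_matrix_mult_def algebra_simps)

lemma S4:
  fixes A F :: "real^3^3" and D :: "3 \<Rightarrow> real^3"
  shows "(\<Sum>I\<in>UNIV. (A *v (\<Sum>m\<in>UNIV. F$m$I *\<^sub>R D m)) $ I) = (\<Sum>m\<in>UNIV. \<Sum>l\<in>UNIV. (F ** A) $ m $ l * D m $ l)"
  by (simp add: sum_3 matrix_vector_mult_def matrix_matrix_mult_def algebra_simps)

lemma piola:
  fixes D :: "3 \<Rightarrow> real^3^3"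
  assumes "\<And>i I J. D I $ i $ J = D J $ i $ I"
  shows "(\<Sum>I\<in>UNIV. (adj3 (F + D I) - adj3 F - adj3 (D I)) $ I $ l) = 0"
proof -
  have s: "D 2 $ i $ 1 = D 1 $ i $ 2" "D 3 $ i $ 1 = D 1 $ i $ 3" "D 3 $ i $ 2 = D 2 $ i $ 3" for i
    using assms by auto
  have l: "l = 1 \<or> l = 2 \<or> l = 3" using exhaust_3 by blast
  show ?thesis using l
    by (elim disjE; simp add: sum_3 adj3_def s algebra_simps)
qed

lemma core:
  fixes QQ MM Qx Fx :: "real^3^3" and PP Md Ad PQ :: "3 \<Rightarrow> real^3^3" and ww :: "real^3" and Du :: "3 \<Rightarrow> real^3"
  assumes h1: "\<And>I. QQ ** Md I + PP I ** MM = adj3 Fx ** (\<Sum>m\<in>UNIV. Fx$m$I *\<^sub>R PQ m) + Ad I ** Qx"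
    and h2: "QQ ** MM = adj3 Fx ** Qx"
    and div0: "(\<Sum>I\<in>UNIV. PP I $ I) = 0"
    and divQ: "(\<Sum>I\<in>UNIV. PQ I $ I) = 0"
    and pio: "\<And>l. (\<Sum>I\<in>UNIV. Ad I $ I $ l) = 0"
  shows "(\<Sum>I\<in>UNIV. \<Sum>J\<in>UNIV. QQ$I$J * (MM *v (\<Sum>m\<in>UNIV. Fx$m$I *\<^sub>R Du m) + Md I *v ww) $ J)
       = det Fx * (\<Sum>I\<in>UNIV. \<Sum>J\<in>UNIV. Qx$I$J * Du I $ J)"
proof -
  have rowsum: "(\<Sum>J\<in>UNIV. QQ$I$J * v $ J) = (QQ *v v) $ I" for I v
    by (simp add: matrix_vector_mult_def)
  have split: "(\<Sum>I\<in>UNIV. \<Sum>J\<in>UNIV. QQ$I$J * (MM *v (\<Sum>m\<in>UNIV. Fx$m$I *\<^sub>R Du m) + Md I *v ww) $ J)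
     = (\<Sum>I\<in>UNIV. ((QQ ** MM) *v (\<Sum>m\<in>UNIV. Fx$m$I *\<^sub>R Du m)) $ I) + (\<Sum>I\<in>UNIV. ((QQ ** Md I) *v ww) $ I)"
    unfolding rowsum by (simp add: matrix_vector_right_distrib matrix_vector_mul_assoc sum.distrib)
  have eqPQ: "(\<Sum>m\<in>UNIV. Fx$m$I *\<^sub>R PQ m) *v ww = (\<Sum>m\<in>UNIV. Fx$m$I *\<^sub>R (PQ m *v ww))" for I
    by (simp add: vec_eq_iff matrix_vector_mult_def sum_3 algebra_simps)
  have T2: "(\<Sum>I\<in>UNIV. ((QQ ** Md I) *v ww) $ I)
      = (\<Sum>I\<in>UNIV. (adj3 Fx *v (\<Sum>m\<in>UNIV. Fx$m$I *\<^sub>R (PQ m *v ww))) $ I) + (\<Sum>I\<in>UNIV. ((Ad I ** Qx) *v ww) $ I)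
        - (\<Sum>I\<in>UNIV. ((PP I ** MM) *v ww) $ I)"
  proof -
    have "QQ ** Md I = adj3 Fx ** (\<Sum>m\<in>UNIV. Fx$m$I *\<^sub>R PQ m) + Ad I ** Qx - PP I ** MM" for I
      using h1[of I] by (simp add: algebra_simps)
    then show ?thesis
      by (simp add: matrix_vector_mult_diff_rdistrib matrix_vector_mult_add_rdistrib sum.distrib sum_subtractf
          flip: matrix_vector_mul_assoc eqPQ)
  qed
  have X3: "(\<Sum>I\<in>UNIV. ((PP I ** MM) *v ww) $ I) = 0"
    unfolding S1 div0 by simp
  have X2: "(\<Sum>I\<in>UNIV. ((Ad I ** Qx) *v ww) $ I) = 0"
    unfolding S1 by (simp add: sum_component pio)
  have X1: "(\<Sum>I\<in>UNIV. (adj3 Fx *v (\<Sum>m\<in>UNIV. Fx$m$I *\<^sub>R (PQ m *v ww))) $ I) = 0"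
  proof -
    have "(\<Sum>I\<in>UNIV. (adj3 Fx *v (\<Sum>m\<in>UNIV. Fx$m$I *\<^sub>R (PQ m *v ww))) $ I)
       = (\<Sum>m\<in>UNIV. \<Sum>l\<in>UNIV. (det Fx *\<^sub>R mat 1 :: real^3^3) $ m $ l * (PQ m *v ww) $ l)"
      unfolding S4 adj3_right ..
    also have "\<dots> = det Fx * (\<Sum>l\<in>UNIV. (PQ l *v ww) $ l)"
      by (simp add: sum_3 mat_def algebra_simps)
    also have "(\<Sum>l\<in>UNIV. (PQ l *v ww) $ l) = (\<Sum>l\<in>UNIV. ((PQ l ** mat 1) *v ww) $ l)" by simp
    also have "\<dots> = 0" unfolding S1 divQ by simp
    finally show ?thesis by simp
  qed
  have T1: "(\<Sum>I\<in>UNIV. ((QQ ** MM) *v (\<Sum>m\<in>UNIV. Fx$m$I *\<^sub>R Du m)) $ I)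
      = det Fx * (\<Sum>I\<in>UNIV. \<Sum>J\<in>UNIV. Qx$I$J * Du I $ J)"
  proof -
    have "(\<Sum>I\<in>UNIV. ((QQ ** MM) *v (\<Sum>m\<in>UNIV. Fx$m$I *\<^sub>R Du m)) $ I)
      = (\<Sum>m\<in>UNIV. \<Sum>l\<in>UNIV. (Fx ** (adj3 Fx ** Qx)) $ m $ l * Du m $ l)"
      unfolding h2 S4 ..
    also have "\<dots> = det Fx * (\<Sum>I\<in>UNIV. \<Sum>J\<in>UNIV. Qx$I$J * Du I $ J)"
      unfolding matrix_mul_assoc adj3_right scaleR_matmul_left matrix_mul_lid
      by (simp add: sum_distrib_left algebra_simps)
    finally show ?thesis .
  qed
  show ?thesis unfolding split T2 X1 X2 X3 T1 by simp
qed




lemma L_line: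
  assumes "(f has_derivative f') (at Y)"
  shows "((\<lambda>s. f (Y + s *\<^sub>R v)) has_vector_derivative f' v) (at 0)"
proof -
  have l: "((\<lambda>s::real. Y + s *\<^sub>R v) has_derivative (\<lambda>s. s *\<^sub>R v)) (at 0)"
    by (auto intro!: derivative_eq_intros)
  have "((f \<circ> (\<lambda>s. Y + s *\<^sub>R v)) has_derivative (f' \<circ> (\<lambda>s. s *\<^sub>R v))) (at 0)"
    by (rule diff_chain_at[OF l]) (simp add: assms)
  moreover have "f' \<circ> (\<lambda>s. s *\<^sub>R v) = (\<lambda>s. s *\<^sub>R f' v)"
    using bounded_linear.linear[OF has_derivative_bounded_linear[OF assms]] by (auto simp: linear_cmul)
  ultimately show ?thesis by (simp add: has_vector_derivative_def o_def)
qed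

lemma L_pd:
  assumes "(f has_derivative f') (at Y)"
  shows "pd f I Y = f' (axis I 1)"
  unfolding pd_def by (rule vector_derivative_at[OF L_line[OF assms]])

lemma L_chain:
  fixes f :: "real^3 \<Rightarrow> 'b::real_normed_vector"
  assumes f: "(f has_derivative f') (at x0)" and c: "(c has_vector_derivative cv) (at 0)" and c0: "c 0 = x0"
  shows "((\<lambda>s. f (c s)) has_vector_derivative (\<Sum>m\<in>UNIV. cv $ m *\<^sub>R pd f m x0)) (at 0)"
proof -
  have c': "(c has_derivative (\<lambda>s. s *\<^sub>R cv)) (at 0)" using c by (simp add: has_vector_derivative_def)
  have "((f \<circ> c) has_derivative (f' \<circ> (\<lambda>s. s *\<^sub>R cv))) (at 0)"
    by (rule diff_chain_at[OF c']) (simp add: c0 f)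
  moreover have bl: "bounded_linear f'" using has_derivative_bounded_linear[OF f] .
  have "f' \<circ> (\<lambda>s. s *\<^sub>R cv) = (\<lambda>s. s *\<^sub>R f' cv)"
    using bounded_linear.linear[OF bl] by (auto simp: linear_cmul)
  moreover have "f' cv = (\<Sum>m\<in>UNIV. cv $ m *\<^sub>R pd f m x0)"
  proof -
    have "cv = (\<Sum>m\<in>UNIV. cv $ m *\<^sub>R axis m (1::real))"
      using basis_expansion[of cv] by (simp add: scalar_mult_eq_scaleR)
    then have "f' cv = f' (\<Sum>m\<in>UNIV. cv $ m *\<^sub>R axis m (1::real))" by simp
    also have "\<dots> = (\<Sum>m\<in>UNIV. cv $ m *\<^sub>R f' (axis m 1))"
      using bounded_linear.linear[OF bl] by (simp add: linear_sum linear_cmul)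
    finally show ?thesis by (simp add: L_pd[OF f])
  qed
  ultimately show ?thesis by (simp add: has_vector_derivative_def o_def)
qed

lemma L_pdworks:
  assumes "(\<lambda>s. f (Y + s *\<^sub>R axis I 1)) differentiable (at 0)"
  shows "((\<lambda>s. f (Y + s *\<^sub>R axis I 1)) has_vector_derivative pd f I Y) (at 0)"
  unfolding pd_def using assms vector_derivative_works by blast

lemma inner_transpose3: "inner (A *v x) (y::real^3) = inner x (transpose (A::real^3^3) *v y)"
  by (simp add: inner_vec_def sum_3 matrix_vector_mult_def transpose_def algebra_simps)

lemma transpose_scaleR: "transpose (c *\<^sub>R (A::real^'n^'m)) = c *\<^sub>R transpose A"
  by (simp add: vec_eq_iff transpose_def)

lemma adj3_transpose: "transpose (adj3 A) = adj3 (transpose A)"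
  by (simp add: vec_eq_iff forall_3 transpose_def adj3_def)

lemma inv_transpose3: "det (A::real^3^3) \<noteq> 0 \<Longrightarrow> transpose (matrix_inv A) = matrix_inv (transpose A)"
  by (simp add: inv_adj3 transpose_scaleR adj3_transpose)

lemma defgrad_nth: "defgrad chi Y $ i $ J = pd chi J Y $ i"
  by (simp add: defgrad_def grad_def transpose_def)




lemma kin_alg:
  fixes A B Qx R :: "real^3^3" and c :: real
  assumes tA: "transpose A = A" and tQ: "transpose Qx = Qx" and c: "c \<noteq> 0"
  shows "kin_energy (c *\<^sub>R (Qx ** transpose B ** A ** R ** A ** B ** Qx)) v
       = kin_energy R ((c *\<^sub>R (A ** B ** Qx)) *v v) / c"
proof -
  define M where "M = Qx ** transpose B ** A ** R ** A ** B ** Qx"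
  define G where "G = c *\<^sub>R (A ** B ** Qx)"
  have tG: "transpose G = c *\<^sub>R (Qx ** transpose B ** A)"
    unfolding G_def by (simp add: transpose_scaleR matrix_transpose_mul tA tQ matrix_mul_assoc)
  have GRG: "transpose G ** R ** G = c *\<^sub>R (c *\<^sub>R M)"
    unfolding tG by (simp add: G_def M_def scaleR_matmul_left scaleR_matmul_right matrix_mul_assoc)
  have "kin_energy R (G *v v) = inner (G *v v) (R *v (G *v v))" by (simp add: kin_energy_def)
  also have "\<dots> = inner v ((transpose G ** R ** G) *v v)"
    unfolding inner_transpose3 by (simp add: matrix_vector_mul_assoc matrix_mul_assoc)
  also have "\<dots> = c * (c * inner v (M *v v))"
    unfolding GRG by (simp flip: scaleR_matrix_vector_assoc)
  finally have "kin_energy R (G *v v) / c = c * inner v (M *v v)" using c by simp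
  moreover have "kin_energy (c *\<^sub>R M) v = c * inner v (M *v v)"
    by (simp add: kin_energy_def flip: scaleR_matrix_vector_assoc)
  ultimately show ?thesis unfolding M_def G_def by simp
qed



theorem theorem1:
  fixes \<Omega> \<omega> :: "(real^3) set"
    and chi :: "real^3 \<Rightarrow> real^3"
    and \<kappa>\<^sub>0 :: real
    and \<rho>\<^sub>0 Q\<^sub>0 Q :: "real^3 \<Rightarrow> real^3^3"
    and U u :: "real^3 \<Rightarrow> real \<Rightarrow> real^3"
  defines "\<Lambda> \<equiv> (\<lambda>X. det (defgrad chi X))"
    and "Gt \<equiv> (\<lambda>X. det (defgrad chi X) *\<^sub>R (matrix_inv (Q\<^sub>0 X) ** matrix_inv (defgrad chi X) ** Q (chi X)))"
    and "\<rho> \<equiv> (\<lambda>X. det (defgrad chi X) *\<^sub>R (Q (chi X) ** transpose (matrix_inv (defgrad chi X)) ** matrix_inv (Q\<^sub>0 X)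
                 ** \<rho>\<^sub>0 X ** matrix_inv (Q\<^sub>0 X) ** matrix_inv (defgrad chi X) ** Q (chi X)))"
    and "\<kappa> \<equiv> (\<lambda>X. det (defgrad chi X) * \<kappa>\<^sub>0)"
  assumes dom: "open \<Omega>" "connected \<Omega>"
    and chi_smooth: "smooth_on \<Omega> chi"
    and chi_inj: "inj_on chi \<Omega>"
    and chi_onto: "chi ` \<Omega> = \<omega>"
    and Jpos: "\<forall>X\<in>\<Omega>. \<Lambda> X > 0"
    and kappa0: "\<kappa>\<^sub>0 > 0"
    and rho0: "\<forall>X\<in>\<Omega>. sym_pos_def (\<rho>\<^sub>0 X)"
    and Q0_diff: "Q\<^sub>0 differentiable_on \<Omega>"
    and Q0_sym: "\<forall>X\<in>\<Omega>. transpose (Q\<^sub>0 X) = Q\<^sub>0 X \<and> invertible (Q\<^sub>0 X)"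
    and Q0_div: "\<forall>X\<in>\<Omega>. divergence Q\<^sub>0 X = 0"
    and Q_diff: "Q differentiable_on \<omega>"
    and Q_sym: "\<forall>x\<in>\<omega>. transpose (Q x) = Q x \<and> invertible (Q x)"
    and Q_div: "\<forall>x\<in>\<omega>. divergence Q x = 0"
    and u_diff_x: "\<forall>t. (\<lambda>x. u x t) differentiable_on \<omega>"
    and u_diff_t: "\<forall>x\<in>\<omega>. \<forall>t. (\<lambda>s. u x s) differentiable (at t)"
    and rel: "\<forall>X\<in>\<Omega>. \<forall>t. U X t = Gt X *v u (chi X) t"
    and X_in: "X \<in> \<Omega>"
  shows "kin_energy (\<rho> X) (vector_derivative (\<lambda>s. u (chi X) s) (at t))
           = kin_energy (\<rho>\<^sub>0 X) (vector_derivative (\<lambda>s. U X s) (at t)) / \<Lambda> X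
       \<and> strain_energy (\<kappa> X) (Q (chi X)) (grad (\<lambda>x. u x t) (chi X))
           = strain_energy \<kappa>\<^sub>0 (Q\<^sub>0 X) (grad (\<lambda>Y. U Y t) X) / \<Lambda> X"
proof -
  have C3: "Ck (Suc (Suc (Suc 0))) \<Omega> chi" using chi_smooth unfolding smooth_on_def by blast
  have chi_cont: "continuous_on \<Omega> chi" using C3 by simp
  have chi_d: "\<forall>I. \<forall>Y\<in>\<Omega>. (\<lambda>s. chi (Y + s *\<^sub>R axis I 1)) differentiable (at 0)" using C3 by simp
  have F_d: "\<forall>I J. \<forall>Y\<in>\<Omega>. (\<lambda>s. pd chi J (Y + s *\<^sub>R axis I 1)) differentiable (at 0)" using C3 by simp
  have F_c: "\<forall>I J. continuous_on \<Omega> (pd (pd chi J) I)" using C3 by simp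
  have chi_l: "((\<lambda>s. chi (Y + s *\<^sub>R axis I 1)) has_vector_derivative pd chi I Y) (at 0)" if "Y \<in> \<Omega>" for I Y
    using L_pdworks chi_d that by blast
  have F_l: "((\<lambda>s. pd chi J (Y + s *\<^sub>R axis I 1)) has_vector_derivative pd (pd chi J) I Y) (at 0)" if "Y \<in> \<Omega>" for I J Y
    using L_pdworks F_d that by blast
  have sym: "pd (pd chi J) I X = pd (pd chi I) J X" for I J
  proof -
    have "pd (pd chi J) I X $ m = pd (pd chi I) J X $ m" for m
    proof -
      have d1: "\<forall>Y\<in>\<Omega>. ((\<lambda>s. chi (Y + s *\<^sub>R axis J 1) $ m) has_real_derivative pd chi J Y $ m) (at 0)"
        using chi_l by (simp add: has_real_derivative_iff_has_vector_derivative VD_nth)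
      have d2: "\<forall>Y\<in>\<Omega>. ((\<lambda>s. chi (Y + s *\<^sub>R axis I 1) $ m) has_real_derivative pd chi I Y $ m) (at 0)"
        using chi_l by (simp add: has_real_derivative_iff_has_vector_derivative VD_nth)
      have d3: "\<forall>Y\<in>\<Omega>. ((\<lambda>s. pd chi J (Y + s *\<^sub>R axis I 1) $ m) has_real_derivative pd (pd chi J) I Y $ m) (at 0)"
        using F_l by (simp add: has_real_derivative_iff_has_vector_derivative VD_nth)
      have d4: "\<forall>Y\<in>\<Omega>. ((\<lambda>s. pd chi I (Y + s *\<^sub>R axis J 1) $ m) has_real_derivative pd (pd chi I) J Y $ m) (at 0)"
        using F_l by (simp add: has_real_derivative_iff_has_vector_derivative VD_nth)
      have c1: "continuous_on \<Omega> (\<lambda>Y. pd (pd chi J) I Y $ m)" using F_c by (simp add: continuous_on_component)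
      have c2: "continuous_on \<Omega> (\<lambda>Y. pd (pd chi I) J Y $ m)" using F_c by (simp add: continuous_on_component)
      show ?thesis
        using schwarz[where S=\<Omega> and X=X and g="\<lambda>Y. chi Y $ m" and u="axis J 1" and v="axis I 1"
          and gu="\<lambda>Y. pd chi J Y $ m" and gv="\<lambda>Y. pd chi I Y $ m"
          and guv="\<lambda>Y. pd (pd chi J) I Y $ m" and gvu="\<lambda>Y. pd (pd chi I) J Y $ m", OF dom(1) X_in d1 d2 d3 d4 c1 c2] .
    qed
    then show ?thesis by (simp add: vec_eq_iff)
  qed
  have om: "open \<omega>" using invariance_of_domain[OF chi_cont dom(1) chi_inj] chi_onto by simp
  define x0 where "x0 = chi X"
  have x0: "x0 \<in> \<omega>" using chi_onto X_in x0_def by auto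
  define ut where "ut = (\<lambda>x. u x t)"
  have "Q differentiable (at x0 within \<omega>)" using Q_diff x0 unfolding differentiable_on_def by blast
  then have "Q differentiable (at x0)" using at_within_open[OF x0 om] by simp
  then obtain DQ where DQ: "(Q has_derivative DQ) (at x0)" unfolding differentiable_def by blast
  have "ut differentiable (at x0 within \<omega>)" using u_diff_x x0 unfolding differentiable_on_def ut_def by blast
  then have "ut differentiable (at x0)" using at_within_open[OF x0 om] by simp
  then obtain Dut where Dut: "(ut has_derivative Dut) (at x0)" unfolding differentiable_def by blast
  have "Q\<^sub>0 differentiable (at X within \<Omega>)" using Q0_diff X_in unfolding differentiable_on_def by blast
  then have "Q\<^sub>0 differentiable (at X)" using at_within_open[OF X_in dom(1)] by simp
  then obtain DQ0 where DQ0: "(Q\<^sub>0 has_derivative DQ0) (at X)" unfolding differentiable_def by blast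
  have Lpos: "det (defgrad chi Y) > 0" if "Y \<in> \<Omega>" for Y using Jpos that unfolding \<Lambda>_def by blast
  have Q0nz: "det (Q\<^sub>0 Y) \<noteq> 0" if "Y \<in> \<Omega>" for Y using Q0_sym that invertible_det by blast
  have Gt_f: "Gt Y = (1 / det (Q\<^sub>0 Y)) *\<^sub>R (adj3 (Q\<^sub>0 Y) ** adj3 (defgrad chi Y) ** Q (chi Y))" if "Y \<in> \<Omega>" for Y
  proof -
    have nz: "det (defgrad chi Y) \<noteq> 0" using Lpos[OF that] by simp
    show ?thesis unfolding Gt_def using nz Q0nz[OF that]
      by (simp add: inv_adj3 scaleR_matmul_left scaleR_matmul_right)
  qed
  have Q0Gt: "Q\<^sub>0 Y ** Gt Y = adj3 (defgrad chi Y) ** Q (chi Y)" if "Y \<in> \<Omega>" for Y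
    unfolding Gt_f[OF that] using Q0nz[OF that]
    by (simp add: scaleR_matmul_right matrix_mul_assoc adj3_right scaleR_matmul_left)
  define Fd where "Fd I = (\<chi> i J. pd (pd chi J) I X $ i)" for I
  have dir: "\<exists>Md. Q\<^sub>0 X ** Md + pd Q\<^sub>0 I X ** Gt X
        = adj3 (defgrad chi X) ** (\<Sum>m\<in>UNIV. defgrad chi X $ m $ I *\<^sub>R pd Q m x0)
          + (adj3 (defgrad chi X + Fd I) - adj3 (defgrad chi X) - adj3 (Fd I)) ** Q x0
      \<and> pd (\<lambda>Y. U Y t) I X = Gt X *v (\<Sum>m\<in>UNIV. defgrad chi X $ m $ I *\<^sub>R pd ut m x0) + Md *v u x0 t" for I
  proof -
    define \<gamma> where "\<gamma> = (\<lambda>s::real. X + s *\<^sub>R axis I (1::real))"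
    have g0: "\<gamma> 0 = X" by (simp add: \<gamma>_def)
    have Sopen: "open {s. \<gamma> s \<in> \<Omega>}"
    proof -
      have "open (\<gamma> -` \<Omega>)"
        by (rule continuous_open_vimage[OF dom(1)]) (simp add: \<gamma>_def continuous_intros)
      then show ?thesis by (simp add: vimage_def)
    qed
    have S0: "0 \<in> {s. \<gamma> s \<in> \<Omega>}" using X_in g0 by simp
    have dq0: "((\<lambda>s. Q\<^sub>0 (\<gamma> s)) has_vector_derivative pd Q\<^sub>0 I X) (at 0)"
      using L_line[OF DQ0] L_pd[OF DQ0] unfolding \<gamma>_def by simp
    have df: "((\<lambda>s. defgrad chi (\<gamma> s)) has_vector_derivative Fd I) (at 0)"
    proof (rule VD_mat)
      fix i J
      show "((\<lambda>s. defgrad chi (\<gamma> s) $ i $ J) has_vector_derivative Fd I $ i $ J) (at 0)"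
        unfolding defgrad_nth Fd_def \<gamma>_def using VD_nth[OF F_l[OF X_in]] by simp
    qed
    have dc: "((\<lambda>s. chi (\<gamma> s)) has_vector_derivative pd chi I X) (at 0)"
      unfolding \<gamma>_def by (rule chi_l[OF X_in])
    have dq: "((\<lambda>s. Q (chi (\<gamma> s))) has_vector_derivative (\<Sum>m\<in>UNIV. defgrad chi X $ m $ I *\<^sub>R pd Q m x0)) (at 0)"
      using L_chain[OF DQ dc] g0 x0_def by (simp add: defgrad_nth)
    have dw: "((\<lambda>s. ut (chi (\<gamma> s))) has_vector_derivative (\<Sum>m\<in>UNIV. defgrad chi X $ m $ I *\<^sub>R pd ut m x0)) (at 0)"
      using L_chain[OF Dut dc] g0 x0_def by (simp add: defgrad_nth)
    define Mf where "Mf s = (1 / det (Q\<^sub>0 (\<gamma> s))) *\<^sub>R (adj3 (Q\<^sub>0 (\<gamma> s)) ** adj3 (defgrad chi (\<gamma> s)) ** Q (chi (\<gamma> s)))" for s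
    obtain D where D: "((\<lambda>s. det (Q\<^sub>0 (\<gamma> s))) has_real_derivative D) (at 0)"
      using det_deriv_ex[OF dq0] by blast
    have inv: "((\<lambda>s. 1 / det (Q\<^sub>0 (\<gamma> s))) has_real_derivative
        (0 * det (Q\<^sub>0 (\<gamma> 0)) - 1 * D) / (det (Q\<^sub>0 (\<gamma> 0)) * det (Q\<^sub>0 (\<gamma> 0)))) (at 0)"
      by (rule DERIV_divide[OF DERIV_const D]) (simp add: g0 Q0nz X_in)
    have p1: "((\<lambda>s. adj3 (Q\<^sub>0 (\<gamma> s)) ** adj3 (defgrad chi (\<gamma> s))) has_vector_derivative
       (adj3 (Q\<^sub>0 (\<gamma> 0)) ** (adj3 (defgrad chi (\<gamma> 0) + Fd I) - adj3 (defgrad chi (\<gamma> 0)) - adj3 (Fd I))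
        + (adj3 (Q\<^sub>0 (\<gamma> 0) + pd Q\<^sub>0 I X) - adj3 (Q\<^sub>0 (\<gamma> 0)) - adj3 (pd Q\<^sub>0 I X)) ** adj3 (defgrad chi (\<gamma> 0)))) (at 0)"
      by (rule bounded_bilinear.has_vector_derivative[OF bb_matmul adj3_deriv[OF dq0] adj3_deriv[OF df]])
    have p2: "\<exists>E. ((\<lambda>s. adj3 (Q\<^sub>0 (\<gamma> s)) ** adj3 (defgrad chi (\<gamma> s)) ** Q (chi (\<gamma> s))) has_vector_derivative E) (at 0)"
      by (rule exI, rule bounded_bilinear.has_vector_derivative[OF bb_matmul p1 dq])
    then obtain E where E: "((\<lambda>s. adj3 (Q\<^sub>0 (\<gamma> s)) ** adj3 (defgrad chi (\<gamma> s)) ** Q (chi (\<gamma> s))) has_vector_derivative E) (at 0)"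
      by blast
    have "\<exists>Md. (Mf has_vector_derivative Md) (at 0)"
    proof -
      have "\<exists>Md. ((\<lambda>s. (1 / det (Q\<^sub>0 (\<gamma> s))) *\<^sub>R (adj3 (Q\<^sub>0 (\<gamma> s)) ** adj3 (defgrad chi (\<gamma> s)) ** Q (chi (\<gamma> s))))
          has_vector_derivative Md) (at 0)"
        by (rule exI, rule has_vector_derivative_scaleR[OF inv E])
      then show ?thesis unfolding Mf_def[abs_def] by blast
    qed
    then obtain Md where Md: "(Mf has_vector_derivative Md) (at 0)" by blast
    have Mf_Gt: "Mf s = Gt (\<gamma> s)" if "s \<in> {s. \<gamma> s \<in> \<Omega>}" for s
      using Gt_f that by (simp add: Mf_def)
    have M0: "Mf 0 = Gt X" using Mf_Gt[OF S0] g0 by simp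
    have lhsd: "((\<lambda>s. Q\<^sub>0 (\<gamma> s) ** Mf s) has_vector_derivative (Q\<^sub>0 (\<gamma> 0) ** Md + pd Q\<^sub>0 I X ** Mf 0)) (at 0)"
      by (rule bounded_bilinear.has_vector_derivative[OF bb_matmul dq0 Md])
    have rhsd: "((\<lambda>s. adj3 (defgrad chi (\<gamma> s)) ** Q (chi (\<gamma> s))) has_vector_derivative
        (adj3 (defgrad chi (\<gamma> 0)) ** (\<Sum>m\<in>UNIV. defgrad chi X $ m $ I *\<^sub>R pd Q m x0)
        + (adj3 (defgrad chi (\<gamma> 0) + Fd I) - adj3 (defgrad chi (\<gamma> 0)) - adj3 (Fd I)) ** Q (chi (\<gamma> 0)))) (at 0)"
      by (rule bounded_bilinear.has_vector_derivative[OF bb_matmul adj3_deriv[OF df] dq])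
    have rhsd2: "((\<lambda>s. adj3 (defgrad chi (\<gamma> s)) ** Q (chi (\<gamma> s))) has_vector_derivative
        (Q\<^sub>0 (\<gamma> 0) ** Md + pd Q\<^sub>0 I X ** Mf 0)) (at 0)"
    proof (rule has_vector_derivative_transform_within_open[OF lhsd Sopen S0])
      fix s assume "s \<in> {s. \<gamma> s \<in> \<Omega>}"
      then show "Q\<^sub>0 (\<gamma> s) ** Mf s = adj3 (defgrad chi (\<gamma> s)) ** Q (chi (\<gamma> s))"
        using Mf_Gt Q0Gt by simp
    qed
    have h1: "Q\<^sub>0 X ** Md + pd Q\<^sub>0 I X ** Gt X
        = adj3 (defgrad chi X) ** (\<Sum>m\<in>UNIV. defgrad chi X $ m $ I *\<^sub>R pd Q m x0)
          + (adj3 (defgrad chi X + Fd I) - adj3 (defgrad chi X) - adj3 (Fd I)) ** Q x0"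
      using vector_derivative_unique_at[OF rhsd2 rhsd] unfolding g0 M0 x0_def .
    have Ud: "((\<lambda>s. Mf s *v ut (chi (\<gamma> s))) has_vector_derivative
        (Mf 0 *v (\<Sum>m\<in>UNIV. defgrad chi X $ m $ I *\<^sub>R pd ut m x0) + Md *v ut (chi (\<gamma> 0)))) (at 0)"
      by (rule bounded_bilinear.has_vector_derivative[OF bb_matvec Md dw])
    have Ud2: "((\<lambda>s. U (\<gamma> s) t) has_vector_derivative
        (Mf 0 *v (\<Sum>m\<in>UNIV. defgrad chi X $ m $ I *\<^sub>R pd ut m x0) + Md *v ut (chi (\<gamma> 0)))) (at 0)"
    proof (rule has_vector_derivative_transform_within_open[OF Ud Sopen S0])
      fix s assume s: "s \<in> {s. \<gamma> s \<in> \<Omega>}"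
      then show "Mf s *v ut (chi (\<gamma> s)) = U (\<gamma> s) t"
        using Mf_Gt[OF s] rel by (simp add: ut_def)
    qed
    have "pd (\<lambda>Y. U Y t) I X = Mf 0 *v (\<Sum>m\<in>UNIV. defgrad chi X $ m $ I *\<^sub>R pd ut m x0) + Md *v ut (chi (\<gamma> 0))"
    proof -
      have pdU: "pd (\<lambda>Y. U Y t) I X = vector_derivative (\<lambda>s. U (\<gamma> s) t) (at 0)"
        unfolding \<gamma>_def pd_def[of "\<lambda>Y. U Y t"] by simp
      show ?thesis unfolding pdU by (rule vector_derivative_at[OF Ud2])
    qed
    then have "pd (\<lambda>Y. U Y t) I X = Gt X *v (\<Sum>m\<in>UNIV. defgrad chi X $ m $ I *\<^sub>R pd ut m x0) + Md *v u x0 t"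
      unfolding M0 g0 x0_def ut_def .
    with h1 show ?thesis by blast
  qed
  then have dirall: "\<forall>I. \<exists>Md. Q\<^sub>0 X ** Md + pd Q\<^sub>0 I X ** Gt X
        = adj3 (defgrad chi X) ** (\<Sum>m\<in>UNIV. defgrad chi X $ m $ I *\<^sub>R pd Q m x0)
          + (adj3 (defgrad chi X + Fd I) - adj3 (defgrad chi X) - adj3 (Fd I)) ** Q x0
      \<and> pd (\<lambda>Y. U Y t) I X = Gt X *v (\<Sum>m\<in>UNIV. defgrad chi X $ m $ I *\<^sub>R pd ut m x0) + Md *v u x0 t" by blast
  obtain Md where Md0: "\<forall>I. (Q\<^sub>0 X ** Md I + pd Q\<^sub>0 I X ** Gt X
        = adj3 (defgrad chi X) ** (\<Sum>m\<in>UNIV. defgrad chi X $ m $ I *\<^sub>R pd Q m x0)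
          + (adj3 (defgrad chi X + Fd I) - adj3 (defgrad chi X) - adj3 (Fd I)) ** Q x0)
      \<and> pd (\<lambda>Y. U Y t) I X = Gt X *v (\<Sum>m\<in>UNIV. defgrad chi X $ m $ I *\<^sub>R pd ut m x0) + Md I *v u x0 t"

    using choice[OF dirall] by blast
  have Md: "\<And>I. Q\<^sub>0 X ** Md I + pd Q\<^sub>0 I X ** Gt X
        = adj3 (defgrad chi X) ** (\<Sum>m\<in>UNIV. defgrad chi X $ m $ I *\<^sub>R pd Q m x0)
          + (adj3 (defgrad chi X + Fd I) - adj3 (defgrad chi X) - adj3 (Fd I)) ** Q x0"
      "\<And>I. pd (\<lambda>Y. U Y t) I X = Gt X *v (\<Sum>m\<in>UNIV. defgrad chi X $ m $ I *\<^sub>R pd ut m x0) + Md I *v u x0 t"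
    using Md0 by blast+
  have div0: "(\<Sum>I\<in>UNIV. pd Q\<^sub>0 I X $ I) = 0" using Q0_div X_in unfolding divergence_def by blast
  have divQ: "(\<Sum>I\<in>UNIV. pd Q I x0 $ I) = 0" using Q_div x0 unfolding divergence_def by blast
  have pio: "(\<Sum>I\<in>UNIV. (adj3 (defgrad chi X + Fd I) - adj3 (defgrad chi X) - adj3 (Fd I)) $ I $ l) = 0" for l
    by (rule piola) (simp add: Fd_def sym)
  have h2: "Q\<^sub>0 X ** Gt X = adj3 (defgrad chi X) ** Q x0" using Q0Gt[OF X_in] x0_def by simp
  note key0 = core[where QQ="Q\<^sub>0 X" and MM="Gt X" and Qx="Q x0" and Fx="defgrad chi X" and PP="\<lambda>I. pd Q\<^sub>0 I X"
      and Md=Md and Ad="\<lambda>I. adj3 (defgrad chi X + Fd I) - adj3 (defgrad chi X) - adj3 (Fd I)"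
      and PQ="\<lambda>m. pd Q m x0" and ww="u x0 t" and Du="\<lambda>m. pd ut m x0", OF Md(1) h2 div0 divQ pio]
  have gradU: "grad (\<lambda>Y. U Y t) X $ I $ J = pd (\<lambda>Y. U Y t) I X $ J" for I J by (simp add: grad_def)
  have gradu: "grad ut x0 $ I $ J = pd ut I x0 $ J" for I J by (simp add: grad_def)
  have key: "(\<Sum>I\<in>UNIV. \<Sum>J\<in>UNIV. Q\<^sub>0 X $ I $ J * grad (\<lambda>Y. U Y t) X $ I $ J)
      = det (defgrad chi X) * (\<Sum>I\<in>UNIV. \<Sum>J\<in>UNIV. Q x0 $ I $ J * grad ut x0 $ I $ J)"
    unfolding gradU gradu Md(2) using key0 by simp
  define S where "S = (\<Sum>I\<in>UNIV. \<Sum>J\<in>UNIV. Q x0 $ I $ J * grad ut x0 $ I $ J)"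
  have LX: "\<Lambda> X = det (defgrad chi X)" by (simp add: \<Lambda>_def)
  have Lp: "det (defgrad chi X) > 0" using Lpos[OF X_in] .
  have strain: "strain_energy (\<kappa> X) (Q (chi X)) (grad (\<lambda>x. u x t) (chi X))
           = strain_energy \<kappa>\<^sub>0 (Q\<^sub>0 X) (grad (\<lambda>Y. U Y t) X) / \<Lambda> X"
  proof -
    have "strain_energy (\<kappa> X) (Q (chi X)) (grad (\<lambda>x. u x t) (chi X)) = det (defgrad chi X) * \<kappa>\<^sub>0 * S\<^sup>2"
      by (simp add: strain_energy_def S_def \<kappa>_def x0_def ut_def)
    moreover have "strain_energy \<kappa>\<^sub>0 (Q\<^sub>0 X) (grad (\<lambda>Y. U Y t) X) = \<kappa>\<^sub>0 * (det (defgrad chi X) * S)\<^sup>2"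
      unfolding strain_energy_def key S_def ..
    ultimately show ?thesis unfolding LX using Lp by (simp add: power2_eq_square)
  qed
  have kin: "kin_energy (\<rho> X) (vector_derivative (\<lambda>s. u (chi X) s) (at t))
           = kin_energy (\<rho>\<^sub>0 X) (vector_derivative (\<lambda>s. U X s) (at t)) / \<Lambda> X"
  proof -
    define v where "v = vector_derivative (\<lambda>s. u (chi X) s) (at t)"
    have vd: "((\<lambda>s. u (chi X) s) has_vector_derivative v) (at t)"
      unfolding v_def using u_diff_t x0 x0_def by (simp add: vector_derivative_works[symmetric])
    have Ueq: "(\<lambda>s. U X s) = (\<lambda>s. Gt X *v u (chi X) s)" using rel X_in by (simp add: fun_eq_iff)
    have "((\<lambda>s. Gt X *v u (chi X) s) has_vector_derivative Gt X *v v) (at t)"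
      by (rule bounded_linear.has_vector_derivative[OF bounded_bilinear.bounded_linear_right[OF bb_matvec] vd])
    then have vU: "vector_derivative (\<lambda>s. U X s) (at t) = Gt X *v v"
      unfolding Ueq by (rule vector_derivative_at)
    have tA: "transpose (matrix_inv (Q\<^sub>0 X)) = matrix_inv (Q\<^sub>0 X)"
      using inv_transpose3[OF Q0nz[OF X_in]] Q0_sym X_in by simp
    have tQ: "transpose (Q (chi X)) = Q (chi X)" using Q_sym x0 x0_def by simp
    have nz: "det (defgrad chi X) \<noteq> 0" using Lp by simp
    show ?thesis
      unfolding vU v_def[symmetric] \<rho>_def Gt_def LX
      by (rule kin_alg[OF tA tQ nz])
  qed
  show ?thesis using kin strain by blast
qed


end
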